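(* Fix a dimension $d\ge 1$ and call permutations achievable with respect to $d$-dimensional boxes. (1) If $p_1\in S_n$ and $p_2\in S_k$ are achievable, then the permutation in $S_{n+k}$ whose one-line notation is $p_1(1)\cdots p_1(n)\,(p_2(1)+n)\cdots(p_2(k)+n)$ is achievable. (2) If $p\in S_n$ is achievable and $x\in\{1,\dots,n\}$, then the permutation in $S_{n+1}$ obtained from the one-line notation of $p$ by replacing the entry $x$ with the two consecutive entries $x,\,x+1$ and increasing every other entry greater than $x$ by $1$ is achievable. (3) If $p$ is achievable, then so is its inverse $p^{-1}$.
   Context: A $d$-dimensional box $A$ has closed side lengths $a_1\le\dots\le a_d$ (positive reals). A state of $A$ is either closed or expanded along one side $i$: $a_i$ is replaced by $a_i'$ with $a_i\le a_i'\le 2a_i$, other sides unchanged (only one side can expand). The dimension vector of a state is its side lengths sorted non-decreasingly. A box in some state fits inside another box in some state if each coordinate of the outer one's dimension vector is strictly larger than the corresponding coordinate of the inner one's. An order $X_1,\dots,X_m$ (innermost to outermost) of boxes is a possible arrangement if each box can be given a state so that $X_j$ fits inside $X_{j+1}$ for all $j$; states may differ between arrangements. A permutation $p\in S_m$, written in one-line notation $p(1)p(2)\cdots p(m)$, is achievable if there exist $d$-dimensional boxes $B_1,\dots,B_m$ such that both the natural order $B_1,B_2,\dots,B_m$ and the order $B_{p(1)},B_{p(2)},\dots,B_{p(m)}$ (innermost to outermost) are possible arrangements. *)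

theory Defs
  imports Complex_Main "HOL-Combinatorics.Permutations"
begin

text \<open>A d-dimensional box is given by its closed side lengths, a list of
  d positive reals in non-decreasing order.\<close>
definition is_box :: "nat \<Rightarrow> real list \<Rightarrow> bool" where
  "is_box d a \<longleftrightarrow> length a = d \<and> (\<forall>x\<in>set a. 0 < x) \<and> sorted a"

definition box_states :: "real list \<Rightarrow> real list set" where
  "box_states a = {a} \<union>
     {a[i := t] | i t. i < length a \<and> a ! i \<le> t \<and> t \<le> 2 * a ! i}"

definition dim_vec :: "real list \<Rightarrow> real list" where
  "dim_vec s = sort s"

definition fits_in :: "real list \<Rightarrow> real list \<Rightarrow> bool" where
  "fits_in s t \<longleftrightarrow> length s = length t \<and>
     (\<forall>j < length s. dim_vec s ! j < dim_vec t ! j)"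

text \<open>An order X_1,...,X_m (innermost to outermost) is a possible arrangement.\<close>
definition possible_arrangement :: "real list list \<Rightarrow> bool" where
  "possible_arrangement X \<longleftrightarrow>
     (\<exists>S. length S = length X \<and> (\<forall>j < length X. S ! j \<in> box_states (X ! j)) \<and>
          (\<forall>j. Suc j < length X \<longrightarrow> fits_in (S ! j) (S ! Suc j)))"

definition achievable :: "nat \<Rightarrow> nat \<Rightarrow> (nat \<Rightarrow> nat) \<Rightarrow> bool" where
  "achievable d m p \<longleftrightarrow>
     (\<exists>B :: nat \<Rightarrow> real list. (\<forall>i\<in>{1..m}. is_box d (B i)) \<and>
        possible_arrangement (map B [1..<m+1]) \<and>
        possible_arrangement (map (\<lambda>i. B (p i)) [1..<m+1]))"

definition perm_sum :: "nat \<Rightarrow> (nat \<Rightarrow> nat) \<Rightarrow> nat \<Rightarrow> (nat \<Rightarrow> nat) \<Rightarrow> nat \<Rightarrow> nat" where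
  "perm_sum n p1 k p2 i =
     (if i \<in> {1..n} then p1 i else if i \<in> {n+1..n+k} then p2 (i - n) + n else i)"

definition perm_dup :: "nat \<Rightarrow> (nat \<Rightarrow> nat) \<Rightarrow> nat \<Rightarrow> nat \<Rightarrow> nat" where
  "perm_dup n p x i =
     (let j = inv p x; sh = (\<lambda>v. if x < v then v + 1 else v) in
      if i \<in> {1..j} then sh (p i)
      else if i = j + 1 then x + 1
      else if i \<in> {j+2..n+1} then sh (p (i - 1))
      else i)"

end

theory Submission imports Defs "HOL-Library.Multiset" begin

definition scale :: "real \<Rightarrow> real list \<Rightarrow> real list" where
  "scale c a = map (\<lambda>y. c * y) a"

lemma pa_iff: "possible_arrangement X \<longleftrightarrow>
   (\<exists>S. list_all2 (\<lambda>s a. s \<in> box_states a) S X \<and> successively fits_in S)"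
  unfolding possible_arrangement_def list_all2_conv_all_nth successively_conv_nth
  by auto

lemma la2_set: "list_all2 P S X \<Longrightarrow> s \<in> set S \<Longrightarrow> \<exists>a\<in>set X. P s a"
  by (metis in_set_conv_nth list_all2_conv_all_nth nth_mem)

lemma state_len: "s \<in> box_states a \<Longrightarrow> length s = length a"
  unfolding box_states_def by auto

lemma state_entries:
  assumes s: "s \<in> box_states a" and y: "y \<in> set s" and pos: "\<forall>w\<in>set a. 0 < w"
  shows "\<exists>z\<in>set a. z \<le> y \<and> y \<le> 2*z"
proof (cases "s = a")
  case True
  then show ?thesis using y pos by force
next
  case False
  then obtain i t where it: "s = a[i:=t]" "i < length a" "a!i \<le> t" "t \<le> 2 * a!i"
    using s unfolding box_states_def by auto
  then have "y = t \<or> y \<in> set a" using y set_update_subset_insert[of a i t] by blast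
  then show ?thesis
  proof
    assume "y = t" then show ?thesis using it nth_mem by blast
  next
    assume "y \<in> set a" then show ?thesis using pos by force
  qed
qed

lemma sort_scale: "c > 0 \<Longrightarrow> sort (scale c s) = scale c (sort s)"
  unfolding scale_def
  by (rule properties_for_sort) (auto simp: sorted_map intro: sorted_wrt_mono_rel[OF _ sorted_sort])

lemma state_scale: assumes "c > 0" "s \<in> box_states a" shows "scale c s \<in> box_states (scale c a)"
proof (cases "s = a")
  case True then show ?thesis unfolding box_states_def by simp
next
  case False
  then obtain i t where it: "s = a[i:=t]" "i < length a" "a!i \<le> t" "t \<le> 2 * a!i"
    using assms(2) unfolding box_states_def by auto
  have "scale c s = (scale c a)[i := c*t]" using it unfolding scale_def by (simp add: map_update)
  moreover have "scale c a ! i \<le> c * t" "c * t \<le> 2 * (scale c a ! i)"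
    using it assms(1) unfolding scale_def by auto
  ultimately show ?thesis using it unfolding box_states_def scale_def by fastforce
qed

lemma fits_scale: "c > 0 \<Longrightarrow> fits_in s t \<Longrightarrow> fits_in (scale c s) (scale c t)"
  unfolding fits_in_def dim_vec_def by (simp add: sort_scale) (simp add: scale_def)

lemma pa_scale: assumes "c > 0" "possible_arrangement X"
  shows "possible_arrangement (map (scale c) X)"
proof -
  obtain S where S: "list_all2 (\<lambda>s a. s \<in> box_states a) S X" "successively fits_in S"
    using assms(2) pa_iff by blast
  have "list_all2 (\<lambda>s a. scale c s \<in> box_states (scale c a)) S X"
    using S(1) by (rule list_all2_mono) (rule state_scale[OF assms(1)])
  then have "list_all2 (\<lambda>s a. s \<in> box_states a) (map (scale c) S) (map (scale c) X)"
    by (simp add: list_all2_map1 list_all2_map2)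
  moreover have "successively (\<lambda>s t. fits_in (scale c s) (scale c t)) S"
    using S(2) by (rule successively_mono) (rule fits_scale[OF assms(1)])
  then have "successively fits_in (map (scale c) S)"
    by (simp add: successively_map)
  ultimately show ?thesis using pa_iff by blast
qed

lemma fits_all: "length s = length t \<Longrightarrow> (\<forall>y\<in>set s. \<forall>z\<in>set t. y < z) \<Longrightarrow> fits_in s t"
  unfolding fits_in_def dim_vec_def
proof (intro conjI allI impI)
  fix j assume a: "length s = length t" "\<forall>y\<in>set s. \<forall>z\<in>set t. y < z" "j < length s"
  have "sort s ! j \<in> set s" using a(3) nth_mem[of j "sort s"] by simp
  moreover have "sort t ! j \<in> set t" using a(1,3) nth_mem[of j "sort t"] by simp
  ultimately show "sort s ! j < sort t ! j" using a(2) by blast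
qed simp

lemma pa_append:
  assumes "possible_arrangement X" "possible_arrangement Y"
    "\<forall>a\<in>set X. \<forall>b\<in>set Y. \<forall>s\<in>box_states a. \<forall>t\<in>box_states b. fits_in s t"
  shows "possible_arrangement (X @ Y)"
proof -
  obtain S where S: "list_all2 (\<lambda>s a. s \<in> box_states a) S X" "successively fits_in S"
    using assms(1) pa_iff by blast
  obtain T where T: "list_all2 (\<lambda>s a. s \<in> box_states a) T Y" "successively fits_in T"
    using assms(2) pa_iff by blast
  have "list_all2 (\<lambda>s a. s \<in> box_states a) (S @ T) (X @ Y)"
    using S(1) T(1) by (rule list_all2_appendI)
  moreover have "successively fits_in (S @ T)"
  proof -
    have "fits_in (last S) (hd T)" if "S \<noteq> []" "T \<noteq> []"
    proof -
      have "last S \<in> set S" using that(1) by (rule last_in_set)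
      then have "\<exists>a\<in>set X. last S \<in> box_states a" by (rule la2_set[OF S(1)])
      then obtain a where "a \<in> set X" "last S \<in> box_states a" by blast
      have "hd T \<in> set T" using that(2) by (rule hd_in_set)
      then have "\<exists>b\<in>set Y. hd T \<in> box_states b" by (rule la2_set[OF T(1)])
      then obtain b where "b \<in> set Y" "hd T \<in> box_states b" by blast
      note * = \<open>a \<in> set X\<close> \<open>last S \<in> box_states a\<close>
      show ?thesis using assms(3) * \<open>b \<in> set Y\<close> \<open>hd T \<in> box_states b\<close> by (meson bspec)
    qed
    then show ?thesis unfolding successively_append_iff using S(2) T(2) by blast
  qed
  ultimately show ?thesis using pa_iff by blast
qed

lemma pa_insert:
  assumes pos: "\<forall>y\<in>set a. 0 < y" and pa: "possible_arrangement (xs @ a # ys)"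
  shows "\<forall>\<^sub>F b in at_right 1. possible_arrangement (xs @ a # scale b a # ys)"
proof -
  obtain S where S: "list_all2 (\<lambda>s a. s \<in> box_states a) S (xs @ a # ys)" "successively fits_in S"
    using pa pa_iff by blast
  then obtain us vs where uv: "S = us @ vs" "list_all2 (\<lambda>s a. s \<in> box_states a) us xs"
    "list_all2 (\<lambda>s a. s \<in> box_states a) vs (a # ys)"
    by (auto simp: list_all2_append2)
  then obtain s ws where vs: "vs = s # ws" "s \<in> box_states a" "list_all2 (\<lambda>s a. s \<in> box_states a) ws ys"
    by (auto simp: list_all2_Cons2)
  have spos: "\<forall>y\<in>set s. 0 < y"
    using state_entries[OF vs(2) _ pos] pos by fastforce
  have fs: "fits_in s (scale b s)" if "b > 1" for b
  proof -
    have "sort (scale b s) = scale b (sort s)" using that sort_scale by simp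
    moreover have "\<forall>y\<in>set (sort s). y < b * y" using spos that by auto
    ultimately show ?thesis unfolding fits_in_def dim_vec_def scale_def
      by (simp) (metis length_sort nth_mem set_sort)
  qed
  have ev: "\<forall>\<^sub>F b in at_right 1. (ws = [] \<or> fits_in (scale b s) (hd ws))"
  proof (cases ws)
    case Nil then show ?thesis by simp
  next
    case (Cons t ws')
    then have ft: "fits_in s t" using S(2) uv(1) vs(1) by (auto simp: successively_append_iff successively_Cons)
    have "\<forall>\<^sub>F b in at_right 1. \<forall>j\<in>{..<length s}. b * (sort s ! j) < sort t ! j"
    proof (rule eventually_ball_finite)
      show "finite {..<length s}" by simp
      show "\<forall>j\<in>{..<length s}. \<forall>\<^sub>F b in at_right 1. b * (sort s ! j) < sort t ! j"
      proof
        fix j assume "j \<in> {..<length s}"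
        then have lt: "1 * (sort s ! j) < sort t ! j" using ft unfolding fits_in_def dim_vec_def by simp
        have "((\<lambda>b. b * (sort s ! j)) \<longlongrightarrow> 1 * (sort s ! j)) (at_right 1)"
          by (intro tendsto_intros)
        then show "\<forall>\<^sub>F b in at_right 1. b * (sort s ! j) < sort t ! j"
          using order_tendstoD(2) lt by blast
      qed
    qed
    moreover have "\<forall>\<^sub>F b in at_right (1::real). 1 < b" by (rule eventually_at_right_less)
    ultimately show ?thesis
    proof eventually_elim
      case (elim b)
      then show ?case using Cons ft sort_scale[of b s]
        unfolding fits_in_def dim_vec_def scale_def by auto
    qed
  qed
  moreover have "\<forall>\<^sub>F b in at_right (1::real). 1 < b" by (rule eventually_at_right_less)
  ultimately show ?thesis
  proof eventually_elim
    case (elim b)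
    let ?S = "us @ s # scale b s # ws"
    have "list_all2 (\<lambda>s a. s \<in> box_states a) ?S (xs @ a # scale b a # ys)"
      using uv vs elim state_scale[of b s a] by (auto intro: list_all2_appendI)
    moreover have "successively fits_in ?S"
      using S(2) uv(1) vs(1) elim fs
      by (auto simp: successively_append_iff successively_Cons)
    ultimately show ?case using pa_iff by blast
  qed
qed


lemma box_scale: "c > 0 \<Longrightarrow> is_box d a \<Longrightarrow> is_box d (scale c a)"
  unfolding is_box_def scale_def sorted_map
proof (elim conjE, intro conjI)
  assume "c > 0" "length a = d" "\<forall>x\<in>set a. 0 < x" "sorted a"
  then show "length (map ((*) c) a) = d" "\<forall>x\<in>set (map ((*) c) a). 0 < x"
    "sorted_wrt (\<lambda>x y. c * x \<le> c * y) a"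
    by (auto intro: sorted_wrt_mono_rel[of _ "(\<le>)"])
qed

lemma map_upt_split2: "map f [1..<n+k+1] = map f [1..<n+1] @ map (\<lambda>i. f (i+n)) [1..<k+1]"
proof (induct k)
  case 0 then show ?case by simp
next
  case (Suc k)
  have "[1..<n + Suc k + 1] = [1..<n+k+1] @ [n+k+1]" by simp
  moreover have "[1..<Suc k + 1] = [1..<k+1] @ [k+1]" by simp
  ultimately show ?case using Suc by (simp add: ac_simps)
qed

lemma upt_split1: "a \<le> x \<Longrightarrow> x < b \<Longrightarrow> [a..<b] = [a..<x] @ x # [Suc x..<b]"
proof -
  assume a: "a \<le> x" "x < b"
  have "[a..<b] = [a..<x + (b-x)]" using a by simp
  also have "\<dots> = [a..<x] @ [x..<x + (b-x)]" by (rule upt_add_eq_append[OF a(1)])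
  also have "[x..<x + (b-x)] = [x..<b]" using a by simp
  finally have "[a..<b] = [a..<x] @ [x..<b]" .
  also have "[x..<b] = x # [Suc x..<b]" using a(2) by (rule upt_conv_Cons)
  finally show ?thesis by simp
qed

lemma map_upt_shift1: "map f [Suc m..<Suc k] = map (\<lambda>i. f (Suc i)) [m..<k]"
proof -
  have "[Suc m..<Suc k] = map Suc [m..<k]" by (rule map_Suc_upt[symmetric])
  then show ?thesis by simp
qed

lemma part3:
  fixes n :: nat and p :: "nat \<Rightarrow> nat"
  assumes pp: "p permutes {1..n}" and ach: "achievable d n p"
  shows "achievable d n (inv p)"
proof -
  obtain B where B: "\<forall>i\<in>{1..n}. is_box d (B i)" "possible_arrangement (map B [1..<n+1])"
     "possible_arrangement (map (\<lambda>i. B (p i)) [1..<n+1])"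
    using ach unfolding achievable_def by blast
  have eq: "map (\<lambda>i. B (p (inv p i))) [1..<n+1] = map B [1..<n+1]"
    by (rule map_cong[OF refl]) (simp add: permutes_inverses(1)[OF pp])
  have bx: "\<forall>i\<in>{1..n}. is_box d (B (p i))" using B(1) permutes_in_image[OF pp] by blast
  show "achievable d n (inv p)" unfolding achievable_def
  proof (intro exI[of _ "\<lambda>i. B (p i)"] conjI)
    show "\<forall>i\<in>{1..n}. is_box d (B (p i))" by (rule bx)
    show "possible_arrangement (map (\<lambda>i. B (p i)) [1..<n+1])" by (rule B(3))
    show "possible_arrangement (map (\<lambda>i. B (p (inv p i))) [1..<n+1])" unfolding eq by (rule B(2))
  qed
qed

lemma part1:
  fixes n k :: nat and p1 p2 :: "nat \<Rightarrow> nat"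
  assumes pp1: "p1 permutes {1..n}" and pp2: "p2 permutes {1..k}" and ach1: "achievable d n p1" and ach2: "achievable d k p2"
  shows "achievable d (n + k) (perm_sum n p1 k p2)"
proof -
  obtain B1 where B1: "\<forall>i\<in>{1..n}. is_box d (B1 i)" "possible_arrangement (map B1 [1..<n+1])"
     "possible_arrangement (map (\<lambda>i. B1 (p1 i)) [1..<n+1])"
    using ach1 unfolding achievable_def by blast
  obtain B2 where B2: "\<forall>i\<in>{1..k}. is_box d (B2 i)" "possible_arrangement (map B2 [1..<k+1])"
     "possible_arrangement (map (\<lambda>i. B2 (p2 i)) [1..<k+1])"
    using ach2 unfolding achievable_def by blast
  define A1 where "A1 = insert 0 (\<Union>i\<in>{1..n}. set (B1 i))"
  define A2 where "A2 = insert 1 (\<Union>i\<in>{1..k}. set (B2 i))"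
  define M where "M = Max A1"
  define m where "m = Min A2"
  have fA: "finite A1" "finite A2" by (simp_all add: A1_def A2_def)
  have Mge: "y \<le> M" if "i \<in> {1..n}" "y \<in> set (B1 i)" for i y
    unfolding M_def using fA(1) that by (intro Max_ge) (auto simp: A1_def)
  have M0: "0 \<le> M" unfolding M_def using fA(1) by (intro Max_ge) (auto simp: A1_def)
  have pos2: "0 < y" if "i \<in> {1..k}" "y \<in> set (B2 i)" for i y
    using B2(1) that unfolding is_box_def by blast
  have mpos: "0 < m" unfolding m_def using fA(2) pos2
    by (subst Min_gr_iff) (auto simp: A2_def)
  have mle: "m \<le> y" if "i \<in> {1..k}" "y \<in> set (B2 i)" for i y
    unfolding m_def using fA(2) that by (intro Min_le) (auto simp: A2_def)
  define c where "c = (2*M+1)/m"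
  have cpos: "c > 0" unfolding c_def using M0 mpos by simp
  have cy: "2*M < c*y" if "i \<in> {1..k}" "y \<in> set (B2 i)" for i y
  proof -
    have "c * m \<le> c * y" using mle[OF that] cpos by simp
    moreover have "c * m = 2*M+1" unfolding c_def using mpos by simp
    ultimately show ?thesis by simp
  qed
  define B where "B = (\<lambda>i. if i \<le> n then B1 i else scale c (B2 (i-n)))"
  have cross: "\<forall>a\<in>B1 ` {1..n}. \<forall>b\<in>scale c ` B2 ` {1..k}. \<forall>s\<in>box_states a. \<forall>t\<in>box_states b. fits_in s t"
  proof (intro ballI)
    fix a b s t assume a: "a \<in> B1 ` {1..n}" and b: "b \<in> scale c ` B2 ` {1..k}"
      and s: "s \<in> box_states a" and t: "t \<in> box_states b"
    obtain i where i: "i \<in> {1..n}" "a = B1 i" using a by blast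
    obtain i' where i': "i' \<in> {1..k}" "b = scale c (B2 i')" using b by blast
    have bxa: "is_box d a" using B1(1) i by simp
    have bxb: "is_box d b" using B2(1) i' box_scale cpos by simp
    show "fits_in s t"
    proof (rule fits_all)
      show "length s = length t" using state_len[OF s] state_len[OF t] bxa bxb
        unfolding is_box_def by simp
      show "\<forall>y\<in>set s. \<forall>z\<in>set t. y < z"
      proof (intro ballI)
        fix y z assume y: "y \<in> set s" and z: "z \<in> set t"
        obtain w where w: "w \<in> set a" "y \<le> 2*w"
          using state_entries[OF s y] bxa unfolding is_box_def by blast
        have "w \<le> M" using Mge i w by blast
        obtain v where v: "v \<in> set b" "v \<le> z"
          using state_entries[OF t z] bxb unfolding is_box_def by blast
        obtain u where u: "u \<in> set (B2 i')" "v = c * u" using v i' unfolding scale_def by auto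
        have "2*M < v" using cy[OF i'(1) u(1)] u by simp
        then show "y < z" using w v \<open>w \<le> M\<close> by linarith
      qed
    qed
  qed
  have e1: "map B [1..<n+k+1] = map B1 [1..<n+1] @ map (scale c) (map B2 [1..<k+1])"
    unfolding map_upt_split2[of B n k] by (auto simp: B_def)
  have e2: "map (\<lambda>i. B (perm_sum n p1 k p2 i)) [1..<n+k+1] =
      map (\<lambda>i. B1 (p1 i)) [1..<n+1] @ map (scale c) (map (\<lambda>i. B2 (p2 i)) [1..<k+1])"
  proof -
    have "map (\<lambda>i. B (perm_sum n p1 k p2 i)) [1..<n+1] = map (\<lambda>i. B1 (p1 i)) [1..<n+1]"
    proof (rule map_cong[OF refl])
      fix i assume "i \<in> set [1..<n+1]"
      then have "i \<in> {1..<n+1}" by (simp only: set_upt)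
      then have i: "i \<in> {1..n}" by auto
      then have "p1 i \<in> {1..n}" using permutes_in_image[OF pp1] by blast
      then show "B (perm_sum n p1 k p2 i) = B1 (p1 i)" using i by (auto simp: perm_sum_def B_def)
    qed
    moreover have "map (\<lambda>i. B (perm_sum n p1 k p2 (i+n))) [1..<k+1] = map (scale c) (map (\<lambda>i. B2 (p2 i)) [1..<k+1])"
      unfolding map_map
    proof (rule map_cong[OF refl])
      fix i assume "i \<in> set [1..<k+1]"
      then have "i \<in> {1..<k+1}" by (simp only: set_upt)
      then have i: "i \<in> {1..k}" by auto
      then have "p2 i \<in> {1..k}" using permutes_in_image[OF pp2] by blast
      then show "B (perm_sum n p1 k p2 (i+n)) = (scale c \<circ> (\<lambda>i. B2 (p2 i))) i"
        using i by (auto simp: perm_sum_def B_def)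
    qed
    ultimately show ?thesis unfolding map_upt_split2[of _ n k] by simp
  qed
  have sub1: "set (map B1 [1..<n+1]) \<subseteq> B1 ` {1..n}" by auto
  have sub1': "set (map (\<lambda>i. B1 (p1 i)) [1..<n+1]) \<subseteq> B1 ` {1..n}"
    using permutes_in_image[OF pp1] by auto
  have sub2: "set (map (scale c) (map B2 [1..<k+1])) \<subseteq> scale c ` B2 ` {1..k}" by auto
  have sub2': "set (map (scale c) (map (\<lambda>i. B2 (p2 i)) [1..<k+1])) \<subseteq> scale c ` B2 ` {1..k}"
    using permutes_in_image[OF pp2] by auto
  have boxes: "\<forall>i\<in>{1..n+k}. is_box d (B i)"
  proof
    fix i assume i: "i \<in> {1..n+k}"
    show "is_box d (B i)"
    proof (cases "i \<le> n")
      case True then show ?thesis using B1(1) i by (simp add: B_def)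
    next
      case False then have "i - n \<in> {1..k}" using i by auto
      then show ?thesis using B2(1) box_scale[OF cpos] False by (simp add: B_def)
    qed
  qed
  have "possible_arrangement (map B [1..<n+k+1])"
    unfolding e1 by (rule pa_append[OF B1(2) pa_scale[OF cpos B2(2)]]) (use cross sub1 sub2 in blast)
  moreover have "possible_arrangement (map (\<lambda>i. B (perm_sum n p1 k p2 i)) [1..<n+k+1])"
    unfolding e2 by (rule pa_append[OF B1(3) pa_scale[OF cpos B2(3)]]) (use cross sub1' sub2' in blast)
  ultimately show "achievable d (n + k) (perm_sum n p1 k p2)"
    unfolding achievable_def using boxes by blast
qed

lemma part2:
  fixes n x :: nat and p :: "nat \<Rightarrow> nat"
  assumes pp: "p permutes {1..n}" and ach: "achievable d n p" and x: "x \<in> {1..n}"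
  shows "achievable d (n + 1) (perm_dup n p x)"
proof -
  obtain B where B: "\<forall>i\<in>{1..n}. is_box d (B i)" "possible_arrangement (map B [1..<n+1])"
     "possible_arrangement (map (\<lambda>i. B (p i)) [1..<n+1])"
    using ach unfolding achievable_def by blast
  define j where "j = inv p x"
  have j: "j \<in> {1..n}" "p j = x"
    using permutes_in_image[OF permutes_inv[OF pp]] x permutes_inverses(1)[OF pp] unfolding j_def by auto
  have pne: "p i \<noteq> x" if "i \<noteq> j" for i
    using j(2) permutes_inj[OF pp] that by (metis injD)
  have posx: "\<forall>y\<in>set (B x). 0 < y" using B(1) x unfolding is_box_def by blast
  have e1: "map B [1..<n+1] = map B [1..<x] @ B x # map B [Suc x..<n+1]"
    using upt_split1[of 1 x "n+1"] x by simp
  have e2: "map (\<lambda>i. B (p i)) [1..<n+1] = map (\<lambda>i. B (p i)) [1..<j] @ B x # map (\<lambda>i. B (p i)) [Suc j..<n+1]"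
    using upt_split1[of 1 j "n+1"] j by simp
  have "\<forall>\<^sub>F b in at_right 1. possible_arrangement (map B [1..<x] @ B x # scale b (B x) # map B [Suc x..<n+1])
      \<and> possible_arrangement (map (\<lambda>i. B (p i)) [1..<j] @ B x # scale b (B x) # map (\<lambda>i. B (p i)) [Suc j..<n+1])
      \<and> 1 < b"
    using pa_insert[OF posx B(2)[unfolded e1]] pa_insert[OF posx B(3)[unfolded e2]] eventually_at_right_less
    by (intro eventually_conj) auto
  then obtain b0 where b0: "b0 > 1" "\<forall>y>1. y < b0 \<longrightarrow> possible_arrangement (map B [1..<x] @ B x # scale y (B x) # map B [Suc x..<n+1])
      \<and> possible_arrangement (map (\<lambda>i. B (p i)) [1..<j] @ B x # scale y (B x) # map (\<lambda>i. B (p i)) [Suc j..<n+1])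
      \<and> 1 < y"
    unfolding eventually_at_right_field by blast
  define b where "b = (1 + b0) / 2"
  have b: "possible_arrangement (map B [1..<x] @ B x # scale b (B x) # map B [Suc x..<n+1])"
     "possible_arrangement (map (\<lambda>i. B (p i)) [1..<j] @ B x # scale b (B x) # map (\<lambda>i. B (p i)) [Suc j..<n+1])"
     "1 < b"
    using b0 unfolding b_def by auto
  define sh where "sh = (\<lambda>v::nat. if x < v then v+1 else v)"
  define C where "C = (\<lambda>i. if i \<le> x then B i else if i = x+1 then scale b (B x) else B (i - 1))"
  have Csh: "C (sh v) = B v" if "v \<noteq> x" for v
    using that unfolding C_def sh_def by auto
  have boxes: "\<forall>i\<in>{1..n+1}. is_box d (C i)"
  proof
    fix i assume i: "i \<in> {1..n+1}"
    have bx: "is_box d (scale b (B x))" using B(1) x box_scale[of b d "B x"] b(3) by simp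
    show "is_box d (C i)"
    proof (cases "i \<le> x")
      case True then show ?thesis using B(1) i x by (simp add: C_def)
    next
      case False
      show ?thesis
      proof (cases "i = x + 1")
        case True then show ?thesis using bx by (simp add: C_def)
      next
        case F2: False
        then have "i - 1 \<in> {1..n}" using i False x by auto
        then show ?thesis using B(1) False F2 by (simp add: C_def)
      qed
    qed
  qed
  have n1: "map C [1..<n+1+1] = map B [1..<x] @ B x # scale b (B x) # map B [Suc x..<n+1]"
  proof -
    have h1: "map C [1..<n+1+1] = map C [1..<x] @ C x # C (Suc x) # map C [Suc (Suc x)..<Suc (n+1)]"
      using upt_split1[of 1 x "n+1+1"] x upt_conv_Cons[of "Suc x" "n+2"] by simp
    have h2: "map C [Suc (Suc x)..<Suc (n+1)] = map (\<lambda>i. C (Suc i)) [Suc x..<n+1]"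
      by (rule map_upt_shift1)
    have h3: "map (\<lambda>i. C (Suc i)) [Suc x..<n+1] = map B [Suc x..<n+1]"
    proof (rule map_cong[OF refl])
      fix i assume "i \<in> set [Suc x..<n+1]"
      then have "i \<in> {Suc x..<n+1}" by (simp only: set_upt)
      then show "C (Suc i) = B i" by (simp add: C_def)
    qed
    have h4: "map C [1..<x] = map B [1..<x]"
    proof (rule map_cong[OF refl])
      fix i assume "i \<in> set [1..<x]"
      then have "i \<in> {1..<x}" by (simp only: set_upt)
      then show "C i = B i" by (simp add: C_def)
    qed
    have h5: "C x = B x" "C (Suc x) = scale b (B x)" by (simp_all add: C_def)
    show ?thesis unfolding h1 h2 h3 h4 h5 ..
  qed
  have pd1: "perm_dup n p x i = sh (p i)" if "i \<in> {1..j}" for i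
    using that unfolding perm_dup_def j_def sh_def Let_def by simp
  have pd2: "perm_dup n p x (Suc j) = x + 1"
    unfolding perm_dup_def j_def Let_def by simp
  have pd3: "perm_dup n p x (Suc i) = sh (p i)" if "i \<in> {Suc j..n}" for i
    using that unfolding perm_dup_def j_def sh_def Let_def by simp
  have n2: "map (\<lambda>i. C (perm_dup n p x i)) [1..<n+1+1] =
      map (\<lambda>i. B (p i)) [1..<j] @ B x # scale b (B x) # map (\<lambda>i. B (p i)) [Suc j..<n+1]"
  proof -
    let ?f = "\<lambda>i. C (perm_dup n p x i)"
    have h1: "map ?f [1..<n+1+1] = map ?f [1..<j] @ ?f j # ?f (Suc j) # map ?f [Suc (Suc j)..<Suc (n+1)]"
      using upt_split1[of 1 j "n+1+1"] j upt_conv_Cons[of "Suc j" "n+2"] by simp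
    have h2: "map ?f [Suc (Suc j)..<Suc (n+1)] = map (\<lambda>i. ?f (Suc i)) [Suc j..<n+1]"
      by (rule map_upt_shift1)
    have h3: "map (\<lambda>i. ?f (Suc i)) [Suc j..<n+1] = map (\<lambda>i. B (p i)) [Suc j..<n+1]"
    proof (rule map_cong[OF refl])
      fix i assume "i \<in> set [Suc j..<n+1]"
      then have "i \<in> {Suc j..<n+1}" by (simp only: set_upt)
      then have "i \<in> {Suc j..n}" "i \<noteq> j" by auto
      then show "?f (Suc i) = B (p i)" using pd3 Csh pne by simp
    qed
    have h4: "map ?f [1..<j] = map (\<lambda>i. B (p i)) [1..<j]"
    proof (rule map_cong[OF refl])
      fix i assume "i \<in> set [1..<j]"
      then have "i \<in> {1..<j}" by (simp only: set_upt)
      then have "i \<in> {1..j}" "i \<noteq> j" by auto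
      then show "?f i = B (p i)" using pd1 Csh pne by simp
    qed
    have h5: "?f j = B x" using pd1[of j] j Csh[of x] unfolding sh_def C_def by simp
    have h6: "?f (Suc j) = scale b (B x)" using pd2 unfolding C_def by simp
    show ?thesis unfolding h1 h2 h3 h4 h5 h6 ..
  qed
  show "achievable d (n + 1) (perm_dup n p x)"
    unfolding achievable_def using boxes b(1,2) by (intro exI[of _ C]) (simp only: n1 n2)
qed

theorem theorem17:
  fixes d :: nat
  assumes "d \<ge> 1"
  shows "(\<forall>n k p1 p2. p1 permutes {1..n} \<and> p2 permutes {1..k} \<and>
            achievable d n p1 \<and> achievable d k p2 \<longrightarrow>
            achievable d (n + k) (perm_sum n p1 k p2))
       \<and> (\<forall>n p x. p permutes {1..n} \<and> achievable d n p \<and> x \<in> {1..n} \<longrightarrow>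
            achievable d (n + 1) (perm_dup n p x))
       \<and> (\<forall>n p. p permutes {1..n} \<and> achievable d n p \<longrightarrow> achievable d n (inv p))"
  using part1 part2 part3 by blast

end
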